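(* Let $K$ be a field, $b\ge2$ an integer, and $M=(m_{i,j})_{i,j\ge0}$ a non-degenerate $b$-autosimilar infinite matrix over $K$. Set $d_0=1$ and $d_k=\det(M(k+1))/\det(M(k))$ for $k=1,\dots,b-1$. Then for every $n\ge1$, $$\det(M(n))=\prod_{k=0}^{n-1}\ \prod_i d_{\kappa_i},$$ where $k=\sum_i\kappa_ib^i$ is the base-$b$ expansion of $k$ (digits $\kappa_i\in\{0,\dots,b-1\}$).
   Context: An infinite matrix $M=(m_{i,j})_{i,j\ge0}$ is $b$-autosimilar if $m_{0,0}=1$ and $m_{s,t}=\prod_i m_{\sigma_i,\tau_i}$ whenever $s=\sum_i\sigma_ib^i$, $t=\sum_i\tau_ib^i$ are base-$b$ expansions. $M(n)$ denotes the submatrix $(m_{i,j})_{0\le i,j<n}$. $M$ is non-degenerate if $\det(M(n))\neq0$ for $n=2,\dots,b$. *)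

theory Defs
  imports "Jordan_Normal_Form.Determinant"
begin

definition digit :: "nat \<Rightarrow> nat \<Rightarrow> nat \<Rightarrow> nat" where
  "digit b i s = s div b ^ i mod b"

text \<open>The product over all digit positions is taken over
  i < Suc (max s t); all digits at positions >= Suc (max s t) are 0 (as b >= 2),
  and m 0 0 = 1, so this equals the full (finitely supported) product.\<close>
definition autosimilar :: "nat \<Rightarrow> (nat \<Rightarrow> nat \<Rightarrow> 'a::comm_ring_1) \<Rightarrow> bool" where
  "autosimilar b m \<longleftrightarrow> m 0 0 = 1 \<and>
     (\<forall>s t. m s t = (\<Prod>i<Suc (max s t). m (digit b i s) (digit b i t)))"

definition submat :: "(nat \<Rightarrow> nat \<Rightarrow> 'a) \<Rightarrow> nat \<Rightarrow> 'a mat" where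
  "submat m n = mat n n (\<lambda>(i, j). m i j)"

definition nondegenerate :: "nat \<Rightarrow> (nat \<Rightarrow> nat \<Rightarrow> 'a::comm_ring_1) \<Rightarrow> bool" where
  "nondegenerate b m \<longleftrightarrow> (\<forall>n\<in>{2..b}. det (submat m n) \<noteq> 0)"

definition dquot :: "(nat \<Rightarrow> nat \<Rightarrow> 'a::field) \<Rightarrow> nat \<Rightarrow> 'a" where
  "dquot m k = (if k = 0 then 1 else det (submat m (k + 1)) / det (submat m k))"

end

theory Submission
  imports Defs
begin

lemma prod_upt_list: "prod_list (map f [0..<n]) = (\<Prod>p<n. f p)"
  by (induction n) auto

lemma det_LDU:
  fixes M L U :: "nat \<Rightarrow> nat \<Rightarrow> 'a::comm_ring_1" and D :: "nat \<Rightarrow> 'a"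
  assumes L1: "\<And>i. L i i = 1" and L0: "\<And>i k. i < k \<Longrightarrow> L i k = 0"
    and U1: "\<And>i. U i i = 1" and U0: "\<And>k j. j < k \<Longrightarrow> U k j = 0"
    and MM: "\<And>i j. i < n \<Longrightarrow> j < n \<Longrightarrow> M i j = (\<Sum>p<Suc (min i j). L i p * D p * U p j)"
  shows "det (submat M n) = (\<Prod>p<n. D p)"
proof -
  define U2 where "U2 = (\<lambda>p j. D p * U p j)"
  have eq: "submat M n = submat L n * submat U2 n"
  proof (rule eq_matI)
    fix i j assume i: "i < dim_row (submat L n * submat U2 n)" and j: "j < dim_col (submat L n * submat U2 n)"
    then have i': "i < n" and j': "j < n" by (auto simp: submat_def)
    have "(submat L n * submat U2 n) $$ (i, j) = (\<Sum>p\<in>{0..<n}. L i p * (D p * U p j))"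
      using i' j' by (simp add: submat_def scalar_prod_def U2_def)
    also have "\<dots> = (\<Sum>p<Suc (min i j). L i p * (D p * U p j))"
    proof (rule sum.mono_neutral_right)
      show "\<forall>p\<in>{0..<n} - {..<Suc (min i j)}. L i p * (D p * U p j) = 0"
        using L0 U0 by (auto simp: min_def split: if_splits)
    qed (use i' j' in auto)
    also have "\<dots> = M i j" using MM[OF i' j'] by (simp add: mult.assoc)
    finally show "submat M n $$ (i, j) = (submat L n * submat U2 n) $$ (i, j)"
      using i' j' by (simp add: submat_def)
  qed (auto simp: submat_def)
  have dL: "det (submat L n) = 1"
    by (subst det_lower_triangular[of n]) (auto simp: submat_def L0 L1 diag_mat_def prod_upt_list)
  have dU: "det (submat U2 n) = (\<Prod>p<n. D p)"
    by (subst det_upper_triangular[of _ n]) (auto simp: upper_triangular_def submat_def U2_def U0 U1 diag_mat_def prod_upt_list)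
  show ?thesis unfolding eq
    by (subst det_mult[of _ n]) (auto simp: submat_def dL[unfolded submat_def] dU[unfolded submat_def])
qed


function W :: "(nat \<Rightarrow> nat \<Rightarrow> 'a::field) \<Rightarrow> nat \<Rightarrow> nat \<Rightarrow> 'a" where
  "W A i j = A i j - (\<Sum>p<min i j. W A i p * W A p j / W A p p)"
  by auto
termination
  by (relation "measure (\<lambda>(A, i, j). i + j)") auto

declare W.simps[simp del]

definition lW :: "(nat \<Rightarrow> nat \<Rightarrow> 'a::field) \<Rightarrow> nat \<Rightarrow> nat \<Rightarrow> 'a" where
  "lW A i k = (if k < i then W A i k / W A k k else if k = i then 1 else 0)"
definition uW :: "(nat \<Rightarrow> nat \<Rightarrow> 'a::field) \<Rightarrow> nat \<Rightarrow> nat \<Rightarrow> 'a" where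
  "uW A k j = (if k < j then W A k j / W A k k else if k = j then 1 else 0)"

lemma W_ident:
  assumes nz: "\<And>p. p < min i j \<Longrightarrow> W A p p \<noteq> 0"
    and nz2: "i \<noteq> j \<Longrightarrow> W A (min i j) (min i j) \<noteq> 0"
  shows "A i j = (\<Sum>p<Suc (min i j). lW A i p * W A p p * uW A p j)"
proof -
  have s: "(\<Sum>p<min i j. lW A i p * W A p p * uW A p j) = (\<Sum>p<min i j. W A i p * W A p j / W A p p)"
    by (rule sum.cong) (use nz in \<open>auto simp: lW_def uW_def\<close>)
  have last: "lW A i (min i j) * W A (min i j) (min i j) * uW A (min i j) j
      = W A i j"
    using nz2 by (cases i j rule: linorder_cases) (auto simp: lW_def uW_def min_def)
  show ?thesis
    using s last W.simps[of A i j] by simp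
qed


lemma lW1: "lW A i i = 1" and lW0: "i < k \<Longrightarrow> lW A i k = 0"
  and uW1: "uW A i i = 1" and uW0: "j < k \<Longrightarrow> uW A k j = 0"
  by (auto simp: lW_def uW_def)

lemma det_W:
  assumes "\<And>p. p < k \<Longrightarrow> W A p p \<noteq> 0"
  shows "det (submat A (Suc k)) = (\<Prod>p<Suc k. W A p p)"
proof (rule det_LDU[where L="lW A" and U="uW A"])
  fix i j assume "i < Suc k" "j < Suc k"
  then show "A i j = (\<Sum>p<Suc (min i j). lW A i p * W A p p * uW A p j)"
    by (intro W_ident assms) (auto simp: min_def split: if_splits)
qed (auto simp: lW1 lW0 uW1 uW0)

lemma W_nz:
  fixes m :: "nat \<Rightarrow> nat \<Rightarrow> 'a::field"
  assumes m00: "m 0 0 = 1" and nd: "nondegenerate b m"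
  shows "k < b \<Longrightarrow> W m k k \<noteq> 0"
proof (induction k rule: less_induct)
  case (less k)
  have d: "det (submat m (Suc k)) = (\<Prod>p<Suc k. W m p p)"
    using less by (intro det_W) auto
  show ?case
  proof (cases k)
    case 0 then show ?thesis using m00 by (simp add: W.simps[of m 0 0])
  next
    case (Suc k')
    then have "det (submat m (Suc k)) \<noteq> 0" using nd less.prems by (auto simp: nondegenerate_def)
    then show ?thesis using d by auto
  qed
qed

lemma W_dquot:
  fixes m :: "nat \<Rightarrow> nat \<Rightarrow> 'a::field"
  assumes m00: "m 0 0 = 1" and nd: "nondegenerate b m" and k: "k < b"
  shows "W m k k = dquot m k"
proof (cases k)
  case 0 then show ?thesis using m00 by (simp add: W.simps[of m 0 0] dquot_def)
next
  case (Suc k')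
  have nz: "\<And>p. p < Suc k \<Longrightarrow> W m p p \<noteq> 0" using W_nz[OF m00 nd] k by auto
  have d1: "det (submat m (Suc k)) = (\<Prod>p<Suc k. W m p p)" using nz by (intro det_W) auto
  have d2: "det (submat m k) = (\<Prod>p<k. W m p p)" using nz Suc by (simp only:) (intro det_W, auto)
  have "(\<Prod>p<k. W m p p) \<noteq> 0" using nz by auto
  then show ?thesis using d1 d2 Suc by (simp add: dquot_def)
qed


lemma digit_lt: "0 < b \<Longrightarrow> digit b i s < b"
  by (simp add: digit_def)

lemma digit_Suc: "digit b (Suc i) x = digit b i (x div b)"
  by (simp add: digit_def div_mult2_eq mult.commute)

lemma digit_0: "digit b 0 x = x mod b"
  by (simp add: digit_def)

lemma digit_zero: "s < b ^ i \<Longrightarrow> digit b i s = 0"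
  by (simp add: digit_def)

lemma lt_pow: "2 \<le> b \<Longrightarrow> (x::nat) < b ^ x"
  by (meson less_exp order_less_le_trans power_mono zero_le_numeral)

lemma digit_nz_bound: "2 \<le> b \<Longrightarrow> digit b i p \<noteq> 0 \<Longrightarrow> i < p"
proof -
  assume b: "2 \<le> b" and d: "digit b i p \<noteq> 0"
  have "\<not> p < b ^ i" using d by (auto simp: digit_def)
  moreover have "i < b ^ i" using lt_pow[OF b] .
  ultimately show "i < p" by linarith
qed

lemma digit_add0: "c < b \<Longrightarrow> digit b 0 (c + b * q) = c"
  by (simp add: digit_def)

lemma digit_addS: "c < b \<Longrightarrow> digit b (Suc i) (c + b * q) = digit b i q"
  by (simp add: digit_Suc)

lemma exists_digit_less:
  assumes b: "2 \<le> b"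
  shows "s < p \<Longrightarrow> \<exists>i. digit b i s < digit b i p"
proof (induction p arbitrary: s rule: less_induct)
  case (less p)
  show ?case
  proof (cases "s mod b < p mod b")
    case True then show ?thesis by (metis digit_0)
  next
    case False
    show ?thesis
    proof (cases "s div b < p div b")
      case True
      have "p div b < p" using b less.prems by (intro div_less_dividend) auto
      then obtain i where "digit b i (s div b) < digit b i (p div b)" using less.IH True by blast
      then show ?thesis by (metis digit_Suc)
    next
      case F2: False
      have "b * (p div b) + p mod b \<le> b * (s div b) + s mod b"
        using False F2 by (intro add_mono mult_left_mono) auto
      then have "p \<le> s" by simp
      then show ?thesis using less.prems by simp
    qed
  qed
qed

lemma prod_range_le:
  fixes g :: "nat \<Rightarrow> nat \<Rightarrow> 'a::comm_monoid_mult"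
  assumes g: "g 0 0 = 1" and s: "s < b ^ N" and t: "t < b ^ N" and NN: "N \<le> N'" and b: "0 < b"
  shows "(\<Prod>i<N'. g (digit b i s) (digit b i t)) = (\<Prod>i<N. g (digit b i s) (digit b i t))"
proof (rule prod.mono_neutral_left[symmetric])
  show "\<forall>i\<in>{..<N'} - {..<N}. g (digit b i s) (digit b i t) = 1"
  proof
    fix i assume "i \<in> {..<N'} - {..<N}"
    then have "N \<le> i" by auto
    then have "b ^ N \<le> b ^ i" using b by (intro power_increasing) auto
    then show "g (digit b i s) (digit b i t) = 1" using s t g by (simp add: digit_zero)
  qed
qed (use NN in auto)

lemma prod_range:
  fixes g :: "nat \<Rightarrow> nat \<Rightarrow> 'a::comm_monoid_mult"
  assumes g: "g 0 0 = 1" and "s < b ^ N" "t < b ^ N" "s < b ^ N'" "t < b ^ N'" and b: "0 < b"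
  shows "(\<Prod>i<N'. g (digit b i s) (digit b i t)) = (\<Prod>i<N. g (digit b i s) (digit b i t))"
proof (cases "N \<le> N'")
  case True then show ?thesis using prod_range_le[of g s b N t N'] assms by blast
next
  case False then show ?thesis using prod_range_le[of g s b N' t N] assms by auto
qed

lemma sum_split_mult:
  fixes f :: "nat \<Rightarrow> 'a::comm_monoid_add"
  shows "(\<Sum>p<b * K. f p) = (\<Sum>q<K. \<Sum>c<b. f (c + b * q))"
proof (induction K)
  case 0 then show ?case by simp
next
  case (Suc K)
  have "(\<Sum>p<b * Suc K. f p) = (\<Sum>p<b * K. f p) + (\<Sum>p\<in>{b*K..<b*K + b}. f p)"
    by (simp add: sum.atLeastLessThan_concat[symmetric] lessThan_atLeast0 add.commute)
  also have "(\<Sum>p\<in>{b*K..<b*K + b}. f p) = (\<Sum>c<b. f (c + b * K))"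
    using sum.shift_bounds_nat_ivl[of f 0 "b*K" b] by (simp add: lessThan_atLeast0 add.commute)
  finally show ?case using Suc by simp
qed

lemma sum_prod_digits:
  fixes f :: "nat \<Rightarrow> nat \<Rightarrow> 'a::comm_semiring_1"
  assumes b: "0 < b"
  shows "(\<Sum>p<b ^ N. \<Prod>i<N. f i (digit b i p)) = (\<Prod>i<N. \<Sum>c<b. f i c)"
proof (induction N arbitrary: f)
  case 0 then show ?case by simp
next
  case (Suc N)
  have "(\<Sum>p<b ^ Suc N. \<Prod>i<Suc N. f i (digit b i p))
      = (\<Sum>q<b ^ N. \<Sum>c<b. \<Prod>i<Suc N. f i (digit b i (c + b * q)))"
    by (simp add: sum_split_mult)
  also have "\<dots> = (\<Sum>q<b ^ N. \<Sum>c<b. f 0 c * (\<Prod>i<N. f (Suc i) (digit b i q)))"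
    by (intro sum.cong refl) (simp only: prod.lessThan_Suc_shift digit_add0 digit_addS lessThan_iff)
  also have "\<dots> = (\<Sum>c<b. f 0 c) * (\<Sum>q<b ^ N. \<Prod>i<N. f (Suc i) (digit b i q))"
    by (simp add: sum_distrib_left sum_distrib_right sum.swap[of _ "{..<b}"])
  also have "\<dots> = (\<Sum>c<b. f 0 c) * (\<Prod>i<N. \<Sum>c<b. f (Suc i) c)"
    using Suc[of "\<lambda>i. f (Suc i)"] by simp
  also have "\<dots> = (\<Prod>i<Suc N. \<Sum>c<b. f i c)"
    by (simp only: prod.lessThan_Suc_shift)
  finally show ?case .
qed


theorem corollary2p2:
  fixes m :: "nat \<Rightarrow> nat \<Rightarrow> 'a::field" and b n :: nat
  assumes "b \<ge> 2" and "autosimilar b m" and "nondegenerate b m" and "n \<ge> 1"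
  shows "det (submat m n) = (\<Prod>k<n. \<Prod>i<Suc k. dquot m (digit b i k))"
proof -
  note b2 = assms(1) and nd = assms(3)
  have b0: "0 < b" using b2 by simp
  have m00: "m 0 0 = 1" and auto: "\<And>s t. m s t = (\<Prod>i<Suc (max s t). m (digit b i s) (digit b i t))"
    using assms(2) unfolding autosimilar_def by blast+
  define l where "l = lW m"
  define u where "u = uW m"
  define D where "D = (\<lambda>c. W m c c)"
  have D0: "D 0 = 1" using m00 by (simp add: D_def W.simps[of m 0 0])
  have l00: "l 0 0 = 1" and u00: "u 0 0 = 1" by (auto simp: l_def u_def lW1 uW1)
  have block: "m c d = (\<Sum>p<b. l c p * D p * u p d)" if c: "c < b" and d: "d < b" for c d
  proof -
    have "m c d = (\<Sum>p<Suc (min c d). l c p * D p * u p d)"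
      unfolding l_def u_def D_def
      by (rule W_ident; rule W_nz[OF m00 nd]) (use c d in \<open>auto simp: min_def split: if_splits\<close>)
    also have "\<dots> = (\<Sum>p<b. l c p * D p * u p d)"
      by (rule sum.mono_neutral_left) (use c d in \<open>auto simp: l_def u_def lW0 uW0 min_def\<close>)
    finally show ?thesis .
  qed
  define L' where "L' = (\<lambda>s p. \<Prod>i<Suc (max s p). l (digit b i s) (digit b i p))"
  define U' where "U' = (\<lambda>p t. \<Prod>i<Suc (max p t). u (digit b i p) (digit b i t))"
  define D' where "D' = (\<lambda>p. \<Prod>i<Suc p. D (digit b i p))"
  have pw: "x < b ^ Suc y" if "x \<le> y" for x y
  proof -
    have "b ^ y \<le> b * b ^ y" using b0 by simp
    then show ?thesis using lt_pow[OF b2, of y] that unfolding power_Suc by linarith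
  qed
  have L1: "L' s s = 1" for s by (simp add: L'_def l_def lW1)
  have U1: "U' s s = 1" for s by (simp add: U'_def u_def uW1)
  have L0: "L' s p = 0" if sp: "s < p" for s p
  proof -
    obtain i where i: "digit b i s < digit b i p" using exists_digit_less[OF b2 sp] by blast
    have "i < Suc (max s p)" using digit_nz_bound[OF b2, of i p] i by simp
    moreover have "l (digit b i s) (digit b i p) = 0" using i by (simp add: l_def lW0)
    ultimately show ?thesis unfolding L'_def by (intro prod_zero) auto
  qed
  have U0: "U' p t = 0" if sp: "t < p" for t p
  proof -
    obtain i where i: "digit b i t < digit b i p" using exists_digit_less[OF b2 sp] by blast
    have "i < Suc (max p t)" using digit_nz_bound[OF b2, of i p] i by simp
    moreover have "u (digit b i p) (digit b i t) = 0" using i by (simp add: u_def uW0)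
    ultimately show ?thesis unfolding U'_def by (intro prod_zero) auto
  qed
  have MM: "m s t = (\<Sum>p<Suc (min s t). L' s p * D' p * U' p t)" for s t
  proof -
    define N where "N = Suc (max s t)"
    have sN: "s < b ^ N" and tN: "t < b ^ N" unfolding N_def using pw[of s "max s t"] pw[of t "max s t"] by auto
    have "m s t = (\<Prod>i<N. m (digit b i s) (digit b i t))" unfolding N_def by (rule auto)
    also have "\<dots> = (\<Prod>i<N. \<Sum>c<b. l (digit b i s) c * D c * u c (digit b i t))"
      by (intro prod.cong refl block digit_lt b0)
    also have "\<dots> = (\<Sum>p<b ^ N. \<Prod>i<N. l (digit b i s) (digit b i p) * D (digit b i p) * u (digit b i p) (digit b i t))"
      by (rule sum_prod_digits[OF b0, symmetric])
    also have "\<dots> = (\<Sum>p<b ^ N. L' s p * D' p * U' p t)"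
    proof (intro sum.cong refl)
      fix p assume "p \<in> {..<b ^ N}"
      then have pN: "p < b ^ N" by simp
      have e1: "(\<Prod>i<N. l (digit b i s) (digit b i p)) = L' s p"
        unfolding L'_def by (rule prod_range[where g=l, OF l00]) (use pw[of s "max s p"] pw[of p "max s p"] sN pN b0 in auto)
      have e2: "(\<Prod>i<N. D (digit b i p)) = D' p"
        unfolding D'_def using prod_range[of "\<lambda>x y. D x" p b N p "Suc p"] D0 pN b0 pw[of p p] by simp
      have e3: "(\<Prod>i<N. u (digit b i p) (digit b i t)) = U' p t"
        unfolding U'_def by (rule prod_range[where g=u, OF u00]) (use pw[of t "max p t"] pw[of p "max p t"] tN pN b0 in auto)
      show "(\<Prod>i<N. l (digit b i s) (digit b i p) * D (digit b i p) * u (digit b i p) (digit b i t))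
          = L' s p * D' p * U' p t"
        by (simp add: prod.distrib e1 e2 e3)
    qed
    also have "\<dots> = (\<Sum>p<Suc (min s t). L' s p * D' p * U' p t)"
    proof (rule sum.mono_neutral_right)
      show "{..<Suc (min s t)} \<subseteq> {..<b ^ N}" using sN tN by auto
      show "\<forall>p\<in>{..<b ^ N} - {..<Suc (min s t)}. L' s p * D' p * U' p t = 0"
        using L0 U0 by (auto simp: min_def split: if_splits)
    qed auto
    finally show ?thesis .
  qed
  have "det (submat m n) = (\<Prod>p<n. D' p)"
    by (rule det_LDU[where L=L' and U=U']) (use L1 L0 U1 U0 MM in auto)
  also have "\<dots> = (\<Prod>k<n. \<Prod>i<Suc k. dquot m (digit b i k))"
    unfolding D'_def D_def
    by (intro prod.cong refl W_dquot[OF m00 nd] digit_lt b0)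
  finally show ?thesis .
qed

end
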